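(* Let $\alpha\in\mathbb R$ and let $(\mathfrak g_1,\varphi_1,\xi_1,\eta_1,g_1)$ and $(\mathfrak g_2,\varphi_2,\xi_2,\eta_2,g_2)$ be two almost $\alpha$-coK\"ahler Lie algebras with $\mathcal L_{\xi_i}\varphi_i=0$ for $i=1,2$ (in particular, two $K$-cosymplectic Lie algebras). For $i=1,2$ let $\mathfrak h_i=\ker\eta_i$, $J_i=\varphi_i|_{\mathfrak h_i}$, $h_i=g_i|_{\mathfrak h_i\times\mathfrak h_i}$ and $D_i=\mathrm{ad}_{\xi_i}|_{\mathfrak h_i}$. Then $\mathfrak g_1$ and $\mathfrak g_2$ are isomorphic (as almost $\alpha$-coK\"ahler Lie algebras) if and only if there exists an isomorphism $\psi:(\mathfrak h_1,J_1,h_1)\to(\mathfrak h_2,J_2,h_2)$ of almost K\"ahler Lie algebras such that $\psi\circ D_1=D_2\circ\psi$.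
   Context: For a Lie algebra, $d\eta(x,y)=-\eta([x,y])$ and $d\omega(x,y,z)=-\omega([x,y],z)-\omega([y,z],x)-\omega([z,x],y)$. An almost contact metric structure on a $(2n+1)$-dimensional Lie algebra $\mathfrak g$ is $(\varphi,\xi,\eta,g)$ with $\eta(\xi)=1$, $\varphi^2=-I+\eta\otimes\xi$, $\eta\circ\varphi=0$, $g$ positive definite with $g(\varphi x,\varphi y)=g(x,y)-\eta(x)\eta(y)$; $\Phi(x,y)=g(x,\varphi y)$. It is almost $\alpha$-coK\"ahler if $\eta\wedge\Phi^n\neq0$, $d\eta=0$, $d\Phi=2\alpha\,\eta\wedge\Phi$; for $\alpha=0$ it is almost coK\"ahler, and $K$-cosymplectic if moreover $\xi$ is Killing. $\mathcal L_\xi\varphi=\mathrm{ad}_\xi\circ\varphi-\varphi\circ\mathrm{ad}_\xi$. An almost K\"ahler structure on a $2n$-dimensional Lie algebra is $(J,h)$, $J^2=-I$, $h$ positive definite, $h(Jx,Jy)=h(x,y)$, $h(x,Jy)$ closed and nondegenerate. Isomorphism of almost $\alpha$-coK\"ahler Lie algebras: Lie algebra isomorphism $\Psi$ with $\Psi\circ\varphi_1=\varphi_2\circ\Psi$, $\eta_2\circ\Psi=\eta_1$, $\Psi\xi_1=\xi_2$, $\Psi^*g_2=g_1$. Isomorphism of almost K\"ahler Lie algebras: Lie algebra isomorphism $\psi$ with $\psi\circ J_1=J_2\circ\psi$, $\psi^*h_2=h_1$. *)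

theory Defs
  imports "HOL-Analysis.Analysis" "HOL-Combinatorics.Permutations"
begin

text \<open>Real Lie algebras: the underlying space is a finite-dimensional real vector space,
  rendered as a type of class euclidean_space (the euclidean inner product is NOT used;
  the metric g is an arbitrary bilinear form).\<close>

definition lie_algebra :: "('a::real_vector \<Rightarrow> 'a \<Rightarrow> 'a) \<Rightarrow> bool" where
  "lie_algebra br \<longleftrightarrow> bilinear br \<and> (\<forall>x. br x x = 0) \<and>
     (\<forall>x y z. br x (br y z) + br y (br z x) + br z (br x y) = 0)"

definition almost_contact_metric ::
  "('a::real_vector \<Rightarrow> 'a) \<Rightarrow> 'a \<Rightarrow> ('a \<Rightarrow> real) \<Rightarrow> ('a \<Rightarrow> 'a \<Rightarrow> real) \<Rightarrow> bool" where
  "almost_contact_metric \<phi> \<xi> \<eta> g \<longleftrightarrow>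
     linear \<phi> \<and> linear \<eta> \<and> \<eta> \<xi> = 1 \<and>
     (\<forall>x. \<phi> (\<phi> x) = - x + \<eta> x *\<^sub>R \<xi>) \<and>
     (\<forall>x. \<eta> (\<phi> x) = 0) \<and>
     bilinear g \<and> (\<forall>x y. g x y = g y x) \<and> (\<forall>x. x \<noteq> 0 \<longrightarrow> g x x > 0) \<and>
     (\<forall>x y. g (\<phi> x) (\<phi> y) = g x y - \<eta> x * \<eta> y)"

definition fund_form :: "('a \<Rightarrow> 'a \<Rightarrow> real) \<Rightarrow> ('a \<Rightarrow> 'a) \<Rightarrow> 'a \<Rightarrow> 'a \<Rightarrow> real" where
  "fund_form g \<phi> x y = g x (\<phi> y)"

definition d1 :: "('a \<Rightarrow> 'a \<Rightarrow> 'a) \<Rightarrow> ('a \<Rightarrow> real) \<Rightarrow> 'a \<Rightarrow> 'a \<Rightarrow> real" where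
  "d1 br \<eta> x y = - \<eta> (br x y)"

definition d2 :: "('a \<Rightarrow> 'a \<Rightarrow> 'a) \<Rightarrow> ('a \<Rightarrow> 'a \<Rightarrow> real) \<Rightarrow> 'a \<Rightarrow> 'a \<Rightarrow> 'a \<Rightarrow> real" where
  "d2 br \<omega> x y z = - \<omega> (br x y) z - \<omega> (br y z) x - \<omega> (br z x) y"

text \<open>Wedge of a 1-form and a 2-form (determinant convention, consistent with d2).\<close>
definition wedge12 :: "('a \<Rightarrow> real) \<Rightarrow> ('a \<Rightarrow> 'a \<Rightarrow> real) \<Rightarrow> 'a \<Rightarrow> 'a \<Rightarrow> 'a \<Rightarrow> real" where
  "wedge12 \<eta> \<omega> x y z = \<eta> x * \<omega> y z + \<eta> y * \<omega> z x + \<eta> z * \<omega> x y"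

text \<open>eta wedge Phi^n is nonzero: the full alternation of eta (x) Phi (x) ... (x) Phi
  (n copies of Phi), which is a nonzero constant multiple of eta wedge Phi^n, is not
  identically zero.\<close>
definition eta_wedge_Phi_pow_nonzero :: "('a \<Rightarrow> real) \<Rightarrow> ('a \<Rightarrow> 'a \<Rightarrow> real) \<Rightarrow> nat \<Rightarrow> bool" where
  "eta_wedge_Phi_pow_nonzero \<eta> \<Phi> n \<longleftrightarrow>
     (\<exists>v :: nat \<Rightarrow> 'a.
        (\<Sum>\<sigma> | \<sigma> permutes {0..2*n}.
            of_int (sign \<sigma>) * \<eta> (v (\<sigma> 0)) *
            (\<Prod>k<n. \<Phi> (v (\<sigma> (2*k+1))) (v (\<sigma> (2*k+2))))) \<noteq> 0)"

definition almost_alpha_cokahler ::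
  "real \<Rightarrow> nat \<Rightarrow> ('a::euclidean_space \<Rightarrow> 'a \<Rightarrow> 'a) \<Rightarrow> ('a \<Rightarrow> 'a) \<Rightarrow> 'a \<Rightarrow> ('a \<Rightarrow> real)
     \<Rightarrow> ('a \<Rightarrow> 'a \<Rightarrow> real) \<Rightarrow> bool" where
  "almost_alpha_cokahler \<alpha> n br \<phi> \<xi> \<eta> g \<longleftrightarrow>
     lie_algebra br \<and> DIM('a) = 2*n+1 \<and> almost_contact_metric \<phi> \<xi> \<eta> g \<and>
     eta_wedge_Phi_pow_nonzero \<eta> (fund_form g \<phi>) n \<and>
     (\<forall>x y. d1 br \<eta> x y = 0) \<and>
     (\<forall>x y z. d2 br (fund_form g \<phi>) x y z = 2 * \<alpha> * wedge12 \<eta> (fund_form g \<phi>) x y z)"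

definition lie_deriv_phi :: "('a::real_vector \<Rightarrow> 'a \<Rightarrow> 'a) \<Rightarrow> 'a \<Rightarrow> ('a \<Rightarrow> 'a) \<Rightarrow> 'a \<Rightarrow> 'a" where
  "lie_deriv_phi br \<xi> \<phi> x = br \<xi> (\<phi> x) - \<phi> (br \<xi> x)"

definition acok_iso ::
  "('a::real_vector \<Rightarrow> 'a \<Rightarrow> 'a) \<Rightarrow> ('a \<Rightarrow> 'a) \<Rightarrow> 'a \<Rightarrow> ('a \<Rightarrow> real) \<Rightarrow> ('a \<Rightarrow> 'a \<Rightarrow> real) \<Rightarrow>
   ('b::real_vector \<Rightarrow> 'b \<Rightarrow> 'b) \<Rightarrow> ('b \<Rightarrow> 'b) \<Rightarrow> 'b \<Rightarrow> ('b \<Rightarrow> real) \<Rightarrow> ('b \<Rightarrow> 'b \<Rightarrow> real) \<Rightarrow>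
   ('a \<Rightarrow> 'b) \<Rightarrow> bool" where
  "acok_iso br1 \<phi>1 \<xi>1 \<eta>1 g1 br2 \<phi>2 \<xi>2 \<eta>2 g2 \<Psi> \<longleftrightarrow>
     linear \<Psi> \<and> bij \<Psi> \<and>
     (\<forall>x y. \<Psi> (br1 x y) = br2 (\<Psi> x) (\<Psi> y)) \<and>
     (\<forall>x. \<Psi> (\<phi>1 x) = \<phi>2 (\<Psi> x)) \<and>
     (\<forall>x. \<eta>2 (\<Psi> x) = \<eta>1 x) \<and>
     \<Psi> \<xi>1 = \<xi>2 \<and>
     (\<forall>x y. g2 (\<Psi> x) (\<Psi> y) = g1 x y)"

text \<open>Isomorphism of almost Kaehler Lie algebras (H1, J1, h1) and (H2, J2, h2), where
  H_i is a Lie subalgebra (subspace closed under br_i) of the ambient space, J_i and h_i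
  are the restrictions of the given maps to H_i. The map psi only matters on H1.\<close>
definition ak_iso ::
  "('a::real_vector \<Rightarrow> 'a \<Rightarrow> 'a) \<Rightarrow> 'a set \<Rightarrow> ('a \<Rightarrow> 'a) \<Rightarrow> ('a \<Rightarrow> 'a \<Rightarrow> real) \<Rightarrow>
   ('b::real_vector \<Rightarrow> 'b \<Rightarrow> 'b) \<Rightarrow> 'b set \<Rightarrow> ('b \<Rightarrow> 'b) \<Rightarrow> ('b \<Rightarrow> 'b \<Rightarrow> real) \<Rightarrow>
   ('a \<Rightarrow> 'b) \<Rightarrow> bool" where
  "ak_iso br1 H1 J1 h1 br2 H2 J2 h2 \<psi> \<longleftrightarrow>
     (\<forall>x\<in>H1. \<forall>y\<in>H1. \<psi> (x + y) = \<psi> x + \<psi> y) \<and>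
     (\<forall>c. \<forall>x\<in>H1. \<psi> (c *\<^sub>R x) = c *\<^sub>R \<psi> x) \<and>
     bij_betw \<psi> H1 H2 \<and>
     (\<forall>x\<in>H1. \<forall>y\<in>H1. \<psi> (br1 x y) = br2 (\<psi> x) (\<psi> y)) \<and>
     (\<forall>x\<in>H1. \<psi> (J1 x) = J2 (\<psi> x)) \<and>
     (\<forall>x\<in>H1. \<forall>y\<in>H1. h2 (\<psi> x) (\<psi> y) = h1 x y)"

end

theory Submission
  imports Defs
begin

lemma acm_phi_xi:
  assumes "almost_contact_metric \<phi> \<xi> \<eta> g"
  shows "\<phi> \<xi> = 0"
proof -
  have l: "linear \<phi>" and e: "\<eta> \<xi> = 1" and pp: "\<And>x. \<phi> (\<phi> x) = - x + \<eta> x *\<^sub>R \<xi>"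
    and ep: "\<And>x. \<eta> (\<phi> x) = 0"
    using assms unfolding almost_contact_metric_def by auto
  have "\<phi> (\<phi> \<xi>) = 0" using pp[of \<xi>] e by simp
  hence "\<phi> (\<phi> (\<phi> \<xi>)) = 0" using linear_0[OF l] by simp
  moreover have "\<phi> (\<phi> (\<phi> \<xi>)) = - \<phi> \<xi>" using pp[of "\<phi> \<xi>"] ep[of \<xi>] by simp
  ultimately show ?thesis by simp
qed

lemma acm_g_xi:
  assumes "almost_contact_metric \<phi> \<xi> \<eta> g"
  shows "g \<xi> y = \<eta> y" "g y \<xi> = \<eta> y"
proof -
  have b: "bilinear g" and e: "\<eta> \<xi> = 1" and s: "\<And>x y. g x y = g y x"
    and gg: "\<And>x y. g (\<phi> x) (\<phi> y) = g x y - \<eta> x * \<eta> y"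
    using assms unfolding almost_contact_metric_def by auto
  have "g (\<phi> \<xi>) (\<phi> y) = 0" using acm_phi_xi[OF assms] bilinear_lzero[OF b] by simp
  thus "g \<xi> y = \<eta> y" using gg[of \<xi> y] e by simp
  thus "g y \<xi> = \<eta> y" using s by simp
qed

lemma lie_anti:
  assumes "lie_algebra br" shows "br y x = - br x y"
proof -
  have b: "bilinear br" and a: "\<And>x. br x x = 0" using assms unfolding lie_algebra_def by auto
  have "br (x + y) (x + y) = 0" using a by simp
  hence "br x x + br x y + (br y x + br y y) = 0"
    by (simp add: bilinear_ladd[OF b] bilinear_radd[OF b] algebra_simps)
  thus ?thesis using a by (simp add: eq_neg_iff_add_eq_0 add.commute)
qed

lemma forward:
  assumes "acok_iso br1 \<phi>1 \<xi>1 \<eta>1 g1 br2 \<phi>2 \<xi>2 \<eta>2 g2 \<Psi>"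
  shows "ak_iso br1 {x. \<eta>1 x = 0} \<phi>1 g1 br2 {x. \<eta>2 x = 0} \<phi>2 g2 \<Psi> \<and>
               (\<forall>x\<in>{x. \<eta>1 x = 0}. \<Psi> (br1 \<xi>1 x) = br2 \<xi>2 (\<Psi> x))"
proof -
  have l: "linear \<Psi>" and bj: "bij \<Psi>" and br: "\<And>x y. \<Psi> (br1 x y) = br2 (\<Psi> x) (\<Psi> y)"
    and ph: "\<And>x. \<Psi> (\<phi>1 x) = \<phi>2 (\<Psi> x)" and et: "\<And>x. \<eta>2 (\<Psi> x) = \<eta>1 x"
    and xi: "\<Psi> \<xi>1 = \<xi>2" and g: "\<And>x y. g2 (\<Psi> x) (\<Psi> y) = g1 x y"
    using assms unfolding acok_iso_def by auto
  have "bij_betw \<Psi> {x. \<eta>1 x = 0} {x. \<eta>2 x = 0}"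
    unfolding bij_betw_def
  proof
    show "inj_on \<Psi> {x. \<eta>1 x = 0}" using bj by (meson bij_def inj_on_subset subset_UNIV)
    show "\<Psi> ` {x. \<eta>1 x = 0} = {x. \<eta>2 x = 0}"
    proof
      show "\<Psi> ` {x. \<eta>1 x = 0} \<subseteq> {x. \<eta>2 x = 0}" using et by auto
      show "{x. \<eta>2 x = 0} \<subseteq> \<Psi> ` {x. \<eta>1 x = 0}"
      proof
        fix y assume "y \<in> {x. \<eta>2 x = 0}"
        obtain x where "y = \<Psi> x" using bj by (metis bij_pointE)
        thus "y \<in> \<Psi> ` {x. \<eta>1 x = 0}" using et \<open>y \<in> _\<close> by auto
      qed
    qed
  qed
  thus ?thesis unfolding ak_iso_def
    using linear_add[OF l] linear_scale[OF l] br ph g xi by auto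
qed

lemma backward:
  assumes L1: "lie_algebra br1" and L2: "lie_algebra br2"
    and A1: "almost_contact_metric \<phi>1 \<xi>1 \<eta>1 g1"
    and A2: "almost_contact_metric \<phi>2 \<xi>2 \<eta>2 g2"
    and D1: "\<And>x y. \<eta>1 (br1 x y) = 0"
    and I: "ak_iso br1 {x. \<eta>1 x = 0} \<phi>1 g1 br2 {x. \<eta>2 x = 0} \<phi>2 g2 \<psi>"
    and D: "\<forall>x\<in>{x. \<eta>1 x = 0}. \<psi> (br1 \<xi>1 x) = br2 \<xi>2 (\<psi> x)"
  shows "\<exists>\<Psi>. acok_iso br1 \<phi>1 \<xi>1 \<eta>1 g1 br2 \<phi>2 \<xi>2 \<eta>2 g2 \<Psi>"
proof -
  let ?H1 = "{x. \<eta>1 x = 0}" and ?H2 = "{x. \<eta>2 x = 0}"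
  have pa: "\<And>x y. \<eta>1 x = 0 \<Longrightarrow> \<eta>1 y = 0 \<Longrightarrow> \<psi> (x + y) = \<psi> x + \<psi> y"
    and ps: "\<And>c x. \<eta>1 x = 0 \<Longrightarrow> \<psi> (c *\<^sub>R x) = c *\<^sub>R \<psi> x"
    and pb: "bij_betw \<psi> ?H1 ?H2"
    and pbr: "\<And>x y. \<eta>1 x = 0 \<Longrightarrow> \<eta>1 y = 0 \<Longrightarrow> \<psi> (br1 x y) = br2 (\<psi> x) (\<psi> y)"
    and pph: "\<And>x. \<eta>1 x = 0 \<Longrightarrow> \<psi> (\<phi>1 x) = \<phi>2 (\<psi> x)"
    and pg: "\<And>x y. \<eta>1 x = 0 \<Longrightarrow> \<eta>1 y = 0 \<Longrightarrow> g2 (\<psi> x) (\<psi> y) = g1 x y"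
    using I unfolding ak_iso_def by auto
  have pD: "\<And>x. \<eta>1 x = 0 \<Longrightarrow> \<psi> (br1 \<xi>1 x) = br2 \<xi>2 (\<psi> x)" using D by auto
  have pH: "\<And>x. \<eta>1 x = 0 \<Longrightarrow> \<eta>2 (\<psi> x) = 0" using pb unfolding bij_betw_def by auto
  have pinj: "\<And>x y. \<eta>1 x = 0 \<Longrightarrow> \<eta>1 y = 0 \<Longrightarrow> \<psi> x = \<psi> y \<Longrightarrow> x = y"
    using pb unfolding bij_betw_def inj_on_def by auto
  have psurj: "\<And>z. \<eta>2 z = 0 \<Longrightarrow> \<exists>x. \<eta>1 x = 0 \<and> \<psi> x = z"
    using pb unfolding bij_betw_def by (metis (mono_tags, lifting) imageE mem_Collect_eq)
  have p0: "\<psi> 0 = 0" using ps[of 0 0] A1 unfolding almost_contact_metric_def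
    by (simp add: linear_0)
  have le1: "linear \<eta>1" and e1: "\<eta>1 \<xi>1 = 1" and lp1: "linear \<phi>1" and bg1: "bilinear g1"
    and ep1: "\<And>x. \<eta>1 (\<phi>1 x) = 0"
    using A1 unfolding almost_contact_metric_def by auto
  have le2: "linear \<eta>2" and e2: "\<eta>2 \<xi>2 = 1" and lp2: "linear \<phi>2" and bg2: "bilinear g2"
    using A2 unfolding almost_contact_metric_def by auto
  have alt1: "br1 \<xi>1 \<xi>1 = 0" using L1 unfolding lie_algebra_def by auto
  have alt2: "br2 \<xi>2 \<xi>2 = 0" using L2 unfolding lie_algebra_def by auto
  have bb1: "bilinear br1" using L1 unfolding lie_algebra_def by auto
  have bb2: "bilinear br2" using L2 unfolding lie_algebra_def by auto
  define P where "P x = x - \<eta>1 x *\<^sub>R \<xi>1" for x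
  have P0: "\<eta>1 (P x) = 0" for x
    unfolding P_def by (simp add: linear_diff[OF le1] linear_scale[OF le1] e1)
  have Pd: "x = P x + \<eta>1 x *\<^sub>R \<xi>1" for x unfolding P_def by simp
  have PH: "\<eta>1 x = 0 \<Longrightarrow> P x = x" for x unfolding P_def by simp
  have Padd: "P (x + y) = P x + P y" for x y
    unfolding P_def by (simp add: linear_add[OF le1] algebra_simps)
  have Pscale: "P (c *\<^sub>R x) = c *\<^sub>R P x" for c x
    unfolding P_def by (simp add: linear_scale[OF le1] algebra_simps)
  define \<Psi> where "\<Psi> x = \<psi> (P x) + \<eta>1 x *\<^sub>R \<xi>2" for x
  have lin: "linear \<Psi>"
  proof (rule linearI)
    fix x y show "\<Psi> (x + y) = \<Psi> x + \<Psi> y"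
      unfolding \<Psi>_def Padd by (simp add: pa[OF P0 P0] linear_add[OF le1] algebra_simps)
  next
    fix c x show "\<Psi> (c *\<^sub>R x) = c *\<^sub>R \<Psi> x"
      unfolding \<Psi>_def Pscale by (simp add: ps[OF P0] linear_scale[OF le1] algebra_simps)
  qed
  have et: "\<eta>2 (\<Psi> x) = \<eta>1 x" for x
    unfolding \<Psi>_def by (simp add: linear_add[OF le2] linear_scale[OF le2] pH[OF P0] e2)
  have xi: "\<Psi> \<xi>1 = \<xi>2" unfolding \<Psi>_def P_def by (simp add: e1 p0)
  have \<Psi>H: "\<eta>1 x = 0 \<Longrightarrow> \<Psi> x = \<psi> x" for x unfolding \<Psi>_def using PH by simp
  have bj: "bij \<Psi>"
  proof (rule bijI)
    show "inj \<Psi>"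
    proof (rule injI)
      fix x y assume h: "\<Psi> x = \<Psi> y"
      hence ee: "\<eta>1 x = \<eta>1 y" using et by metis
      hence "\<psi> (P x) = \<psi> (P y)" using h unfolding \<Psi>_def by simp
      hence "P x = P y" using pinj P0 by blast
      thus "x = y" using ee Pd by metis
    qed
    show "surj \<Psi>" unfolding surj_def
    proof
      fix z
      have "\<eta>2 (z - \<eta>2 z *\<^sub>R \<xi>2) = 0" by (simp add: linear_diff[OF le2] linear_scale[OF le2] e2)
      then obtain h where h: "\<eta>1 h = 0" "\<psi> h = z - \<eta>2 z *\<^sub>R \<xi>2" using psurj by blast
      let ?x = "h + \<eta>2 z *\<^sub>R \<xi>1"
      have ex: "\<eta>1 ?x = \<eta>2 z" using h by (simp add: linear_add[OF le1] linear_scale[OF le1] e1)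
      have "P ?x = h" unfolding P_def ex by simp
      hence "\<Psi> ?x = z" unfolding \<Psi>_def ex using h by simp
      thus "\<exists>x. z = \<Psi> x" by metis
    qed
  qed
  have ph: "\<Psi> (\<phi>1 x) = \<phi>2 (\<Psi> x)" for x
  proof -
    have "\<phi>1 x = \<phi>1 (P x)" using Pd[of x] linear_add[OF lp1] linear_scale[OF lp1] acm_phi_xi[OF A1]
      by (metis add.right_neutral scale_zero_right)
    hence "\<Psi> (\<phi>1 x) = \<psi> (\<phi>1 (P x))" using \<Psi>H ep1 by metis
    also have "\<dots> = \<phi>2 (\<psi> (P x))" using pph P0 by blast
    also have "\<dots> = \<phi>2 (\<Psi> x)" unfolding \<Psi>_def
      by (simp add: linear_add[OF lp2] linear_scale[OF lp2] acm_phi_xi[OF A2])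
    finally show ?thesis .
  qed
  have g: "g2 (\<Psi> x) (\<Psi> y) = g1 x y" for x y
  proof -
    have "g2 (\<Psi> x) (\<Psi> y) = g2 (\<psi> (P x)) (\<psi> (P y)) + \<eta>1 x * \<eta>1 y"
      unfolding \<Psi>_def
      by (simp add: bilinear_ladd[OF bg2] bilinear_radd[OF bg2] bilinear_lmul[OF bg2]
          bilinear_rmul[OF bg2] acm_g_xi[OF A2] pH[OF P0] e2 linear_add[OF le2] linear_scale[OF le2])
    also have "\<dots> = g1 (P x) (P y) + \<eta>1 x * \<eta>1 y" using pg P0 by simp
    also have "\<dots> = g1 x y"
    proof -
      have "g1 (P x + a *\<^sub>R \<xi>1) (P y + b *\<^sub>R \<xi>1) = g1 (P x) (P y) + a * b" for a b
        by (simp add: bilinear_ladd[OF bg1] bilinear_radd[OF bg1] bilinear_lmul[OF bg1]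
          bilinear_rmul[OF bg1] acm_g_xi[OF A1] P0 e1 linear_add[OF le1] linear_scale[OF le1])
      from this[of "\<eta>1 x" "\<eta>1 y"] show ?thesis by (simp only: Pd[symmetric])
    qed
    finally show ?thesis .
  qed
  have br: "\<Psi> (br1 x y) = br2 (\<Psi> x) (\<Psi> y)" for x y
  proof -
    define a where "a = \<eta>1 x" define b where "b = \<eta>1 y"
    have "br1 x y = br1 (P x + a *\<^sub>R \<xi>1) (P y + b *\<^sub>R \<xi>1)" using Pd a_def b_def by metis
    also have "\<dots> = br1 (P x) (P y) + (-b) *\<^sub>R br1 \<xi>1 (P x) + a *\<^sub>R br1 \<xi>1 (P y)"
      by (simp add: bilinear_ladd[OF bb1] bilinear_radd[OF bb1] bilinear_lmul[OF bb1]
          bilinear_rmul[OF bb1] lie_anti[OF L1, of \<xi>1 "P x"] alt1)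
    finally have e: "br1 x y = br1 (P x) (P y) + (-b) *\<^sub>R br1 \<xi>1 (P x) + a *\<^sub>R br1 \<xi>1 (P y)" .
    have "\<Psi> (br1 x y) = \<psi> (br1 x y)" using \<Psi>H D1 by metis
    also have "\<dots> = \<psi> (br1 (P x) (P y)) + (-b) *\<^sub>R \<psi> (br1 \<xi>1 (P x)) + a *\<^sub>R \<psi> (br1 \<xi>1 (P y))"
    proof -
      have lc: "\<psi> (u + c *\<^sub>R v + d *\<^sub>R w) = \<psi> u + c *\<^sub>R \<psi> v + d *\<^sub>R \<psi> w"
        if "\<eta>1 u = 0" "\<eta>1 v = 0" "\<eta>1 w = 0" for u v w c d
      proof -
        have h1: "\<eta>1 (c *\<^sub>R v) = 0" "\<eta>1 (d *\<^sub>R w) = 0" using that linear_scale[OF le1] by auto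
        have h2: "\<eta>1 (u + c *\<^sub>R v) = 0" using that h1 linear_add[OF le1] by auto
        show ?thesis using pa[OF h2 h1(2)] pa[OF that(1) h1(1)] ps that by simp
      qed
      show ?thesis unfolding e by (rule lc[OF D1 D1 D1])
    qed
    also have "\<dots> = br2 (\<psi> (P x)) (\<psi> (P y)) + (-b) *\<^sub>R br2 \<xi>2 (\<psi> (P x)) + a *\<^sub>R br2 \<xi>2 (\<psi> (P y))"
      using pbr pD P0 by simp
    also have "\<dots> = br2 (\<Psi> x) (\<Psi> y)"
      unfolding \<Psi>_def a_def[symmetric] b_def[symmetric]
      by (simp add: bilinear_ladd[OF bb2] bilinear_radd[OF bb2] bilinear_lmul[OF bb2]
          bilinear_rmul[OF bb2] lie_anti[OF L2, of \<xi>2 "\<psi> (P x)"] alt2)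
    finally show ?thesis .
  qed
  show ?thesis unfolding acok_iso_def using lin bj br ph et xi g by blast
qed

theorem mainTheorem11:
  fixes \<alpha> :: real and n1 n2 :: nat
    and br1 :: "'a::euclidean_space \<Rightarrow> 'a \<Rightarrow> 'a" and \<phi>1 :: "'a \<Rightarrow> 'a" and \<xi>1 :: 'a
    and \<eta>1 :: "'a \<Rightarrow> real" and g1 :: "'a \<Rightarrow> 'a \<Rightarrow> real"
    and br2 :: "'b::euclidean_space \<Rightarrow> 'b \<Rightarrow> 'b" and \<phi>2 :: "'b \<Rightarrow> 'b" and \<xi>2 :: 'b
    and \<eta>2 :: "'b \<Rightarrow> real" and g2 :: "'b \<Rightarrow> 'b \<Rightarrow> real"
  assumes "almost_alpha_cokahler \<alpha> n1 br1 \<phi>1 \<xi>1 \<eta>1 g1"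
    and "almost_alpha_cokahler \<alpha> n2 br2 \<phi>2 \<xi>2 \<eta>2 g2"
    and "\<forall>x. lie_deriv_phi br1 \<xi>1 \<phi>1 x = 0"
    and "\<forall>x. lie_deriv_phi br2 \<xi>2 \<phi>2 x = 0"
  shows "(\<exists>\<Psi>. acok_iso br1 \<phi>1 \<xi>1 \<eta>1 g1 br2 \<phi>2 \<xi>2 \<eta>2 g2 \<Psi>) \<longleftrightarrow>
         (\<exists>\<psi>. ak_iso br1 {x. \<eta>1 x = 0} \<phi>1 g1 br2 {x. \<eta>2 x = 0} \<phi>2 g2 \<psi> \<and>
               (\<forall>x\<in>{x. \<eta>1 x = 0}. \<psi> (br1 \<xi>1 x) = br2 \<xi>2 (\<psi> x)))"
proof
  assume "\<exists>\<Psi>. acok_iso br1 \<phi>1 \<xi>1 \<eta>1 g1 br2 \<phi>2 \<xi>2 \<eta>2 g2 \<Psi>"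
  thus "\<exists>\<psi>. ak_iso br1 {x. \<eta>1 x = 0} \<phi>1 g1 br2 {x. \<eta>2 x = 0} \<phi>2 g2 \<psi> \<and>
               (\<forall>x\<in>{x. \<eta>1 x = 0}. \<psi> (br1 \<xi>1 x) = br2 \<xi>2 (\<psi> x))"
    using forward by blast
next
  assume "\<exists>\<psi>. ak_iso br1 {x. \<eta>1 x = 0} \<phi>1 g1 br2 {x. \<eta>2 x = 0} \<phi>2 g2 \<psi> \<and>
               (\<forall>x\<in>{x. \<eta>1 x = 0}. \<psi> (br1 \<xi>1 x) = br2 \<xi>2 (\<psi> x))"
  then obtain \<psi> where h: "ak_iso br1 {x. \<eta>1 x = 0} \<phi>1 g1 br2 {x. \<eta>2 x = 0} \<phi>2 g2 \<psi>"
    "\<forall>x\<in>{x. \<eta>1 x = 0}. \<psi> (br1 \<xi>1 x) = br2 \<xi>2 (\<psi> x)" by blast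
  have D1: "\<And>x y. \<eta>1 (br1 x y) = 0" using assms(1)
    unfolding almost_alpha_cokahler_def d1_def by auto
  show "\<exists>\<Psi>. acok_iso br1 \<phi>1 \<xi>1 \<eta>1 g1 br2 \<phi>2 \<xi>2 \<eta>2 g2 \<Psi>"
    using backward[OF _ _ _ _ D1 h] assms(1,2) unfolding almost_alpha_cokahler_def by blast
qed

end
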